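(* Let $q=4f+1$ be a prime, $\alpha$ a generator of $\mathbb Z_q^*$, and $D_k=\{\alpha^{4i+k}:i=0,1,\dots,f-1\}$ for $k=0,1,2,3$. Put $\mathfrak D_0=D_0\cup D_2$ and $\mathfrak D_1=D_1\cup D_3$, and let $\zeta_4\in\mathbb C$ be a primitive $4$th root of unity. Define the sequence $\underline a=(a_0,a_1,\dots,a_{q-1},\dots)$ of period $q$ by $a_i=\zeta_4^k$ if $i\in\mathfrak D_k$ ($k=0,1$) and $a_0=0$. Then $\underline a$ is an almost quaternary nearly perfect sequence of type $\frac{q-3}{2}$ with one zero-symbol, i.e. $C_{\underline a}(t)=\frac{q-3}{2}$ for all $1\le t\le q-1$.
   Context: $C_{\underline a}(t)=\sum_{i=0}^{q-1}a_i\overline{a_{i+t}}$, indices modulo $q$, bar denoting complex conjugation. *)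

theory Defs
  imports "HOL-Number_Theory.Number_Theory" Complex_Main
begin

definition autocorr :: "nat \<Rightarrow> (nat \<Rightarrow> complex) \<Rightarrow> nat \<Rightarrow> complex" where
  "autocorr q a t = (\<Sum>i<q. a i * cnj (a ((i + t) mod q)))"

definition cyc_class :: "nat \<Rightarrow> nat \<Rightarrow> nat \<Rightarrow> nat \<Rightarrow> nat set" where
  "cyc_class q \<alpha> f k = {(\<alpha> ^ (4 * i + k)) mod q | i. i < f}"

definition aq_seq :: "nat \<Rightarrow> nat \<Rightarrow> nat \<Rightarrow> complex \<Rightarrow> nat \<Rightarrow> complex" where
  "aq_seq q \<alpha> f \<zeta> i =
     (let j = i mod q in
      if j \<in> cyc_class q \<alpha> f 0 \<union> cyc_class q \<alpha> f 2 then 1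
      else if j \<in> cyc_class q \<alpha> f 1 \<union> cyc_class q \<alpha> f 3 then \<zeta>
      else 0)"

end

theory Submission
  imports Defs
begin

locale qs =
  fixes q f \<alpha> :: nat
  assumes pq: "prime q" and qf: "q = 4*f+1" and pr: "residue_primroot q \<alpha>"
begin

lemma q_gt1: "q > 1" using pq prime_gt_1_nat by blast
lemma f_pos: "f > 0" using q_gt1 qf by simp
lemma cop: "coprime q \<alpha>" using pr by (simp add: residue_primroot_def)
lemma ordq: "ord q \<alpha> = 4*f" using pr pq qf by (simp add: residue_primroot_def totient_prime)

lemma expcong: "[\<alpha>^m = \<alpha>^n] (mod q) \<longleftrightarrow> [m = n] (mod 4*f)"
  using order_divides_expdiff[OF cop] ordq by simp

lemma notdvd: "\<not> q dvd \<alpha>^m"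
proof
  assume "q dvd \<alpha>^m"
  moreover have "coprime q (\<alpha>^m)" using cop by simp
  ultimately show False using q_gt1 coprime_absorb_left[of q "\<alpha>^m"] by simp
qed

lemma log_bij: "bij_betw (\<lambda>m. \<alpha>^m mod q) {..<4*f} {1..<q}"
proof -
  have inj: "inj_on (\<lambda>m. \<alpha>^m mod q) {..<4*f}"
  proof (rule inj_onI)
    fix m n assume m: "m \<in> {..<4*f}" and n: "n \<in> {..<4*f}" and e: "\<alpha>^m mod q = \<alpha>^n mod q"
    then have "[m = n] (mod 4*f)" using expcong by (simp add: cong_def)
    then show "m = n" using m n by (simp add: cong_def)
  qed
  have sub: "(\<lambda>m. \<alpha>^m mod q) ` {..<4*f} \<subseteq> {1..<q}"
    using notdvd q_gt1 by (auto simp: dvd_eq_mod_eq_0 Suc_le_eq)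
  have "card ((\<lambda>m. \<alpha>^m mod q) ` {..<4*f}) = card {1..<q}"
    using card_image[OF inj] qf by simp
  then have "(\<lambda>m. \<alpha>^m mod q) ` {..<4*f} = {1..<q}"
    using card_subset_eq[OF _ sub] by simp
  with inj show ?thesis by (simp add: bij_betw_def)
qed

lemma exists_log: assumes "\<not> q dvd x" shows "\<exists>m<4*f. [\<alpha>^m = x] (mod q)"
proof -
  have "x mod q \<noteq> 0" using assms by (simp add: dvd_eq_mod_eq_0)
  moreover have "x mod q < q" using q_gt1 by simp
  ultimately have "x mod q \<in> {1..<q}" by simp
  then have "x mod q \<in> (\<lambda>m. \<alpha>^m mod q) ` {..<4*f}" using log_bij by (simp add: bij_betw_def)
  then obtain m where "m < 4*f" "\<alpha>^m mod q = x mod q" by auto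
  then show ?thesis by (auto simp: cong_def)
qed

definition chi :: "nat \<Rightarrow> int" where
  "chi x = (if q dvd x then 0 else if \<exists>m. even m \<and> [\<alpha>^m = x] (mod q) then 1 else -1)"

lemma chi_cong: assumes "[x = y] (mod q)" shows "chi x = chi y"
proof -
  have d: "q dvd x \<longleftrightarrow> q dvd y" using assms cong_dvd_iff by blast
  have e: "(\<exists>m. even m \<and> [\<alpha>^m = x] (mod q)) \<longleftrightarrow> (\<exists>m. even m \<and> [\<alpha>^m = y] (mod q))"
    using assms by (meson cong_sym cong_trans)
  show ?thesis unfolding chi_def using d e by simp
qed

lemma chi_pow: "chi (\<alpha>^m) = (-1)^m"
proof (cases "even m")
  case True then show ?thesis using notdvd by (auto simp: chi_def)
next
  case False
  have "\<not> (\<exists>n. even n \<and> [\<alpha>^n = \<alpha>^m] (mod q))"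
  proof
    assume "\<exists>n. even n \<and> [\<alpha>^n = \<alpha>^m] (mod q)"
    then obtain n where n: "even n" "[n = m] (mod 4*f)" using expcong by blast
    then have "[n = m] (mod 2)" using cong_dvd_modulus_nat[of n m "4*f" 2] by auto
    then show False using n(1) False by (simp add: cong_def) presburger
  qed
  then show ?thesis using notdvd False by (simp add: chi_def)
qed

lemma chi_mult: "chi (x*y) = chi x * chi y"
proof (cases "q dvd x \<or> q dvd y")
  case True
  then have "q dvd x*y" by auto
  then have "chi (x*y) = 0" unfolding chi_def by simp
  moreover have "chi x = 0 \<or> chi y = 0" using True unfolding chi_def by auto
  ultimately show ?thesis by auto
next
  case False
  then obtain m n where m: "[\<alpha>^m = x] (mod q)" and n: "[\<alpha>^n = y] (mod q)"
    using exists_log by blast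
  have "[\<alpha>^(m+n) = x*y] (mod q)" using cong_mult[OF m n] by (simp add: power_add)
  then have "chi (x*y) = (-1)^(m+n)" using chi_cong[of "\<alpha>^(m+n)" "x*y"] chi_pow[of "m+n"] by simp
  moreover have "chi x = (-1)^m" using chi_cong[OF m] chi_pow[of m] by simp
  moreover have "chi y = (-1)^n" using chi_cong[OF n] chi_pow[of n] by simp
  ultimately show ?thesis by (simp add: power_add)
qed

lemma chi_vals: "\<not> q dvd x \<Longrightarrow> chi x = 1 \<or> chi x = -1"
  by (auto simp: chi_def)

lemma chi_sq: "\<not> q dvd x \<Longrightarrow> chi x * chi x = 1"
  using chi_vals by fastforce

lemma chi_one: "chi 1 = 1" using chi_pow[of 0] by simp

lemma chi_Suc0: "chi (Suc 0) = 1" using chi_one by simp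

lemma chi_zero: "chi 0 = 0" by (simp add: chi_def)

lemma chi_mod: "chi (x mod q) = chi x" by (rule chi_cong) (simp add: cong_def)


lemma chi_minus1: "chi (q-1) = 1"
proof -
  have nd: "\<not> q dvd (q-1)" using q_gt1 by (auto dest: dvd_imp_le)
  then obtain m where m: "[\<alpha>^m = q-1] (mod q)" using exists_log by blast
  define k where "k = q - 2"
  have k: "q = Suc (Suc k)" using q_gt1 k_def by simp
  have "(Suc k)^2 = Suc (Suc k) * k + 1" by (simp add: power2_eq_square)
  then have "(q-1)^2 = q*k + 1" using k by simp
  moreover have "(q*k + 1) mod q = 1" using q_gt1 mod_mult_self1[of 1 k q] by (simp add: mult.commute)
  ultimately have "[(q-1)^2 = 1] (mod q)" unfolding cong_def using q_gt1 by simp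
  moreover have "[\<alpha>^(2*m) = (q-1)^2] (mod q)" using cong_pow[OF m, of 2] by (simp add: power_mult mult.commute)
  ultimately have "[\<alpha>^(2*m) = \<alpha>^0] (mod q)" using cong_trans by fastforce
  then have "[2*m = 0] (mod 4*f)" using expcong by blast
  then have "4*f dvd 2*m" by (simp add: cong_0_iff)
  then obtain c where "2*m = 4*f*c" unfolding dvd_def by blast
  then have "m = 2*(f*c)" by simp
  then have "even m" by simp
  then have "chi (\<alpha>^m) = 1" by (simp add: chi_pow)
  then show ?thesis using chi_cong[OF m] by simp
qed

lemma chi_neg: assumes "0 < t" "t < q" shows "chi (q - t) = chi t"
proof -
  have "(q-1)*t + t = (q-1+1)*t" by (simp add: algebra_simps)
  also have "q-1+1 = q" using q_gt1 by simp
  finally have e1: "(q-1)*t + t = q*t" .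
  have e2: "(q-t) + t = q" using assms by simp
  have "[(q-1)*t + t = (q-t) + t] (mod q)" unfolding cong_def e1 e2 by simp
  then have "[(q-1)*t = q - t] (mod q)" using cong_add_rcancel_nat by blast
  then have "chi (q - t) = chi ((q-1)*t)" using chi_cong[of "(q-1)*t" "q-t"] by simp
  also have "\<dots> = chi t" unfolding chi_mult chi_minus1 by simp
  finally show ?thesis .
qed

lemma altsum: "(\<Sum>m<2*k. (-1::int)^m) = 0"
  by (induction k) (auto simp: mult_2 numeral_2_eq_2)

lemma sum_chi: "(\<Sum>x<q. chi x) = 0"
proof -
  have "{..<q} = insert 0 {1..<q}" using q_gt1 by auto
  then have "(\<Sum>x<q. chi x) = (\<Sum>x\<in>{1..<q}. chi x)" by (simp add: chi_zero)
  also have "\<dots> = (\<Sum>m<4*f. chi (\<alpha>^m mod q))"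
    using sum.reindex_bij_betw[OF log_bij, of chi] by simp
  also have "\<dots> = (\<Sum>m<2*(2*f). (-1)^m)" by (simp add: chi_mod chi_pow)
  also have "\<dots> = 0" by (rule altsum)
  finally show ?thesis .
qed

lemma bij_mod_affine:
  assumes "coprime c q"
  shows "bij_betw (\<lambda>i. (b + c*i) mod q) {..<q} {..<q}"
proof -
  have inj: "inj_on (\<lambda>i. (b + c*i) mod q) {..<q}"
  proof (rule inj_onI)
    fix i j assume i: "i \<in> {..<q}" and j: "j \<in> {..<q}" and e: "(b + c*i) mod q = (b + c*j) mod q"
    then have "[b + c*i = b + c*j] (mod q)" by (simp add: cong_def)
    then have "[c*i = c*j] (mod q)" using cong_add_lcancel_nat by blast
    then have "[i = j] (mod q)" using cong_mult_lcancel_nat assms by blast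
    then show "i = j" using i j by (simp add: cong_def)
  qed
  have "(\<lambda>i. (b + c*i) mod q) ` {..<q} \<subseteq> {..<q}" using q_gt1 by auto
  then have "(\<lambda>i. (b + c*i) mod q) ` {..<q} = {..<q}" using endo_inj_surj[OF _ _ inj] by simp
  with inj show ?thesis by (simp add: bij_betw_def)
qed

lemma sum_shift: "(\<Sum>i<q. chi (i + t)) = 0"
proof -
  have "(\<Sum>i<q. chi (i + t)) = (\<Sum>i<q. chi ((t + 1*i) mod q))" by (simp add: chi_mod add.commute)
  also have "\<dots> = (\<Sum>i<q. chi i)"
    using sum.reindex_bij_betw[OF bij_mod_affine[of 1 t], of chi] by simp
  finally show ?thesis using sum_chi by simp
qed

definition minv :: "nat \<Rightarrow> nat" where "minv k = k^(q-2) mod q"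

lemma inv_mul: assumes "\<not> q dvd k" shows "[k * minv k = 1] (mod q)"
proof -
  have "k * k^(q-2) = k^(q-1)" using q_gt1
    by (metis Suc_diff_Suc numeral_2_eq_2 One_nat_def diff_Suc_1 power_Suc)
  then have "[k * k^(q-2) = 1] (mod q)" using fermat_theorem[OF pq assms] by simp
  then show ?thesis unfolding minv_def by (metis cong_def mod_mult_right_eq)
qed

lemma minv_bij: "bij_betw minv {1..<q} {1..<q}"
proof -
  have ndv: "\<not> q dvd k" if "k \<in> {1..<q}" for k using that by (auto dest: dvd_imp_le)
  have sub: "minv ` {1..<q} \<subseteq> {1..<q}"
  proof
    fix y assume "y \<in> minv ` {1..<q}"
    then obtain k where k: "k \<in> {1..<q}" "y = minv k" by auto
    have "\<not> q dvd minv k"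
    proof
      assume "q dvd minv k"
      then have "q dvd k * minv k" by simp
      then have "[k * minv k = 0] (mod q)" by (simp add: cong_0_iff)
      then have "[1 = 0] (mod q)" using inv_mul[OF ndv[OF k(1)]] by (meson cong_sym cong_trans)
      then show False using q_gt1 by (simp add: cong_def)
    qed
    then show "y \<in> {1..<q}" using k q_gt1 by (auto simp: minv_def dvd_eq_mod_eq_0 Suc_le_eq)
  qed
  have inj: "inj_on minv {1..<q}"
  proof (rule inj_onI)
    fix i j assume i: "i \<in> {1..<q}" and j: "j \<in> {1..<q}" and e: "minv i = minv j"
    have "[i * minv i * j = 1 * j] (mod q)" using cong_mult[OF inv_mul[OF ndv[OF i]] cong_refl[of j]] .
    moreover have "[j * minv j * i = 1 * i] (mod q)" using cong_mult[OF inv_mul[OF ndv[OF j]] cong_refl[of i]] .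
    ultimately have "[i = j] (mod q)" using e by (metis cong_sym cong_trans mult.commute mult.left_commute mult_1)
    then show "i = j" using i j by (simp add: cong_def)
  qed
  have "minv ` {1..<q} = {1..<q}" using endo_inj_surj[OF _ sub inj] by simp
  with inj show ?thesis by (simp add: bij_betw_def)
qed

lemma jacobsthal: assumes "0 < t" "t < q" shows "(\<Sum>i<q. chi i * chi (i + t)) = -1"
proof -
  have cop_t: "coprime t q" using assms pq
    by (metis dvd_imp_le not_le prime_imp_coprime coprime_commute)
  have "{..<q} = insert 0 {1..<q}" using q_gt1 by auto
  then have "(\<Sum>i<q. chi i * chi (i + t)) = (\<Sum>i\<in>{1..<q}. chi i * chi (i + t))" by (simp add: chi_zero)
  also have "\<dots> = (\<Sum>k\<in>{1..<q}. chi (minv k) * chi (minv k + t))"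
    using sum.reindex_bij_betw[OF minv_bij, of "\<lambda>i. chi i * chi (i + t)"] by simp
  also have "\<dots> = (\<Sum>k\<in>{1..<q}. chi (1 + t*k))"
  proof (rule sum.cong)
    fix k assume k: "k \<in> {1..<q}"
    then have nd: "\<not> q dvd k" by (auto dest: dvd_imp_le)
    have c1: "[k * minv k = 1] (mod q)" by (rule inv_mul[OF nd])
    have c2: "[k * (minv k + t) = 1 + t*k] (mod q)"
      using cong_add[OF c1 cong_refl[of "t*k"]] by (simp add: algebra_simps)
    have "chi (minv k) * chi (minv k + t) = (chi k * chi k) * (chi (minv k) * chi (minv k + t))"
      using chi_sq[OF nd] by simp
    also have "\<dots> = chi (k * minv k) * chi (k * (minv k + t))" by (simp add: chi_mult)
    also have "\<dots> = chi (1 + t*k)" using chi_cong[OF c1] chi_cong[OF c2] chi_one by simp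
    finally show "chi (minv k) * chi (minv k + t) = chi (1 + t*k)" .
  qed simp
  also have "\<dots> = (\<Sum>k<q. chi (1 + t*k)) - 1"
    using \<open>{..<q} = insert 0 {1..<q}\<close> by (simp add: chi_Suc0)
  also have "(\<Sum>k<q. chi (1 + t*k)) = (\<Sum>k<q. chi ((1 + t*k) mod q))" by (simp add: chi_mod)
  also have "\<dots> = (\<Sum>i<q. chi i)"
    using sum.reindex_bij_betw[OF bij_mod_affine[OF cop_t, of 1], of chi] by simp
  finally show ?thesis using sum_chi by simp
qed


lemma class_chi: assumes "x \<in> cyc_class q \<alpha> f k" shows "\<not> q dvd x" "chi x = (-1)^k"
proof -
  obtain i where x: "x = \<alpha>^(4*i+k) mod q" using assms unfolding cyc_class_def by auto
  show "\<not> q dvd x" using notdvd[of "4*i+k"] x by (simp add: dvd_eq_mod_eq_0)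
  have "chi x = (-1)^(4*i+k)" using x chi_mod chi_pow by simp
  also have "\<dots> = (-1)^k" by (simp add: power_add power_mult)
  finally show "chi x = (-1)^k" .
qed

lemma class_cover: assumes "j < q" "j \<noteq> 0" shows "\<exists>k<4. j \<in> cyc_class q \<alpha> f k"
proof -
  have "j \<in> {1..<q}" using assms by simp
  then have "j \<in> (\<lambda>m. \<alpha>^m mod q) ` {..<4*f}" using log_bij by (simp add: bij_betw_def)
  then obtain m where m: "m < 4*f" "j = \<alpha>^m mod q" by auto
  have e: "j = \<alpha>^(4*(m div 4) + m mod 4) mod q" using m(2) by simp
  have l: "m div 4 < f" using m(1) by simp
  have "j \<in> cyc_class q \<alpha> f (m mod 4)" unfolding cyc_class_def using e l by blast
  then show ?thesis by (intro exI[of _ "m mod 4"]) simp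
qed

lemma aq_val: "aq_seq q \<alpha> f \<zeta> i = (if q dvd i then 0 else if chi i = 1 then 1 else \<zeta>)"
proof (cases "q dvd i")
  case True
  then have "i mod q = 0" by simp
  moreover have "0 \<notin> cyc_class q \<alpha> f k" for k using class_chi(1)[of 0 k] by auto
  ultimately show ?thesis using True unfolding aq_seq_def Let_def by simp
next
  case False
  define j where "j = i mod q"
  have j: "j < q" "j \<noteq> 0" using False q_gt1 by (auto simp: j_def dvd_eq_mod_eq_0)
  have cj: "chi j = chi i" using chi_mod j_def by simp
  obtain k where k: "k < 4" "j \<in> cyc_class q \<alpha> f k" using class_cover[OF j] by blast
  have ck: "chi j = (-1)^k" using class_chi(2)[OF k(2)] .
  show ?thesis
  proof (cases "chi i = 1")
    case True
    have "even k"
    proof (rule ccontr)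
      assume "odd k"
      then have "(-1::int)^k = -1" by simp
      with ck cj True show False by simp
    qed
    then have "k = 0 \<or> k = 2" using k(1) by presburger
    then have "j \<in> cyc_class q \<alpha> f 0 \<union> cyc_class q \<alpha> f 2" using k(2) by auto
    then show ?thesis using True False unfolding aq_seq_def Let_def j_def by simp
  next
    case nT: False
    have n02: "j \<notin> cyc_class q \<alpha> f 0 \<union> cyc_class q \<alpha> f 2"
      using class_chi(2)[of j 0] class_chi(2)[of j 2] cj nT by auto
    have "k \<noteq> 0" "k \<noteq> 2" using n02 k(2) by (metis UnCI)+
    then have "k = 1 \<or> k = 3" using k(1) by arith
    then have "j \<in> cyc_class q \<alpha> f 1 \<union> cyc_class q \<alpha> f 3" using k(2) by auto
    then show ?thesis using nT False n02 unfolding aq_seq_def Let_def j_def by simp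
  qed
qed


lemma main:
  fixes \<zeta> :: complex
  assumes z4: "\<zeta>^4 = 1" and z2: "\<zeta>^2 \<noteq> 1" and t: "0 < t" "t < q"
  shows "autocorr q (aq_seq q \<alpha> f \<zeta>) t = (of_nat q - 3) / 2"
proof -
  have "(\<zeta>^2)^2 = 1" using z4 by (simp add: power_mult[symmetric])
  then have "\<zeta>^2 = 1 \<or> \<zeta>^2 = -1" using power2_eq_1_iff[of "\<zeta>^2"] by blast
  then have zz: "\<zeta>^2 = -1" using z2 by blast
  then have "\<zeta>^2 = \<i>^2" by simp
  then have "\<zeta> = \<i> \<or> \<zeta> = -\<i>" using power2_eq_iff[of \<zeta> \<i>] by blast
  then have cz: "cnj \<zeta> = -\<zeta>" by auto
  have zz': "\<zeta> * \<zeta> = -1" using zz by (simp add: power2_eq_square)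
  define a where "a = aq_seq q \<alpha> f \<zeta>"
  define X where "X i = complex_of_int (chi i)" for i
  define P where "P i = 1/2 + \<zeta>/2 * (X (i+t) - X i) + 1/2 * X i * X (i+t)" for i
  have av: "a i = (if q dvd i then 0 else if chi i = 1 then 1 else \<zeta>)" for i
    unfolding a_def by (rule aq_val)
  have pt: "a i * cnj (a ((i+t) mod q)) =
      P i - (if i = 0 then P 0 else 0) - (if i = q - t then P (q-t) else 0)" if i: "i < q" for i
  proof -
    have a2: "a ((i+t) mod q) = (if q dvd (i+t) then 0 else if chi (i+t) = 1 then 1 else \<zeta>)"
      using av[of "(i+t) mod q"] chi_mod[of "i+t"] by (simp add: dvd_eq_mod_eq_0)
    consider "i = 0" | "i = q - t" | "i \<noteq> 0" "i \<noteq> q - t" by blast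
    then show ?thesis
    proof cases
      case 1
      then have "i \<noteq> q - t" using t by simp
      then show ?thesis using 1 av[of 0] by simp
    next
      case 2
      then have "i \<noteq> 0" "i + t = q" using t by auto
      then show ?thesis using 2 a2 by simp
    next
      case 3
      have n1: "\<not> q dvd i" using 3 i by (auto dest: dvd_imp_le)
      have n2: "\<not> q dvd (i+t)"
      proof
        assume "q dvd (i+t)"
        then obtain c where c: "i + t = q*c" by (auto elim: dvdE)
        have "c \<noteq> 0"
        proof
          assume "c = 0" with c t show False by simp
        qed
        have "i + t < q + q" using i t by simp
        then have "q*c < q*2" using c by (simp add: mult_2_right)
        then have "c < 2" by (metis mult_less_cancel1)
        with \<open>c \<noteq> 0\<close> have "c = 1" by simp
        then show False using c 3 by simp
      qed
      have v1: "chi i = 1 \<or> chi i = -1" using chi_vals[OF n1] .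
      have v2: "chi (i+t) = 1 \<or> chi (i+t) = -1" using chi_vals[OF n2] .
      have L: "a i * cnj (a ((i+t) mod q)) = (if chi i = 1 then 1 else \<zeta>) * cnj (if chi (i+t) = 1 then 1 else \<zeta>)"
        using av[of i] a2 n1 n2 by simp
      have R: "(if chi i = 1 then 1 else \<zeta>) * cnj (if chi (i+t) = 1 then 1 else \<zeta>) = P i"
        using v1 v2
      proof (elim disjE)
        assume "chi i = 1" "chi (i+t) = 1" then show ?thesis by (simp add: P_def X_def)
      next
        assume "chi i = 1" "chi (i+t) = -1" then show ?thesis by (simp add: P_def X_def cz)
      next
        assume "chi i = -1" "chi (i+t) = 1" then show ?thesis by (simp add: P_def X_def)
      next
        assume "chi i = -1" "chi (i+t) = -1" then show ?thesis by (simp add: P_def X_def cz zz')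
      qed
      show ?thesis using L R 3 by simp
    qed
  qed
  have "autocorr q a t = (\<Sum>i<q. a i * cnj (a ((i+t) mod q)))" by (simp add: autocorr_def)
  also have "\<dots> = (\<Sum>i<q. P i - (if i = 0 then P 0 else 0) - (if i = q - t then P (q-t) else 0))"
    by (rule sum.cong) (simp_all add: pt)
  also have "\<dots> = (\<Sum>i<q. P i) - P 0 - P (q - t)"
    using t by (simp add: sum_subtractf)
  also have "(\<Sum>i<q. P i) = of_nat q / 2 + \<zeta>/2 * ((\<Sum>i<q. X (i+t)) - (\<Sum>i<q. X i)) + 1/2 * (\<Sum>i<q. X i * X (i+t))"
    by (simp add: P_def sum.distrib sum_subtractf sum_distrib_left algebra_simps)
  also have "(\<Sum>i<q. X (i+t)) = 0" proof -
    have "(\<Sum>i<q. X (i+t)) = complex_of_int (\<Sum>i<q. chi (i+t))" by (simp add: X_def)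
    then show ?thesis using sum_shift[of t] by simp
  qed
  also have "(\<Sum>i<q. X i) = 0" proof -
    have "(\<Sum>i<q. X i) = complex_of_int (\<Sum>i<q. chi i)" by (simp add: X_def)
    then show ?thesis using sum_chi by simp
  qed
  also have "(\<Sum>i<q. X i * X (i+t)) = -1"
  proof -
    have "(\<Sum>i<q. X i * X (i+t)) = complex_of_int (\<Sum>i<q. chi i * chi (i+t))" by (simp add: X_def)
    then show ?thesis using jacobsthal[OF t] by simp
  qed
  also have "P 0 = 1/2 + \<zeta>/2 * X t" by (simp add: P_def X_def chi_zero)
  also have "P (q - t) = 1/2 - \<zeta>/2 * X t"
  proof -
    have "q - t + t = q" using t by simp
    moreover have "chi q = 0" by (simp add: chi_def)
    moreover have "chi (q - t) = chi t" using chi_neg[OF t] .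
    ultimately show ?thesis by (simp add: P_def X_def)
  qed
  finally have E: "autocorr q a t = of_nat q / 2 + \<zeta>/2 * (0 - 0) + 1/2 * (-1) - (1/2 + \<zeta>/2 * X t) - (1/2 - \<zeta>/2 * X t)" .
  have "autocorr q a t = (of_nat q - 3) / 2" unfolding E by (simp add: field_simps)
  then show ?thesis unfolding a_def .
qed

end

theorem theorem4:
  fixes q f \<alpha> :: nat and \<zeta> :: complex
  assumes "prime q" and "q = 4 * f + 1"
    and "residue_primroot q \<alpha>"
    and "\<zeta> ^ 4 = 1" and "\<zeta> ^ 2 \<noteq> 1"
  shows "\<forall>t. 1 \<le> t \<and> t \<le> q - 1 \<longrightarrow>
           autocorr q (aq_seq q \<alpha> f \<zeta>) t = (of_nat q - 3) / 2"
proof (intro allI impI)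
  fix t assume t: "1 \<le> t \<and> t \<le> q - 1"
  interpret qs q f \<alpha> using assms(1-3) by unfold_locales
  have "0 < t" "t < q" using t q_gt1 by auto
  then show "autocorr q (aq_seq q \<alpha> f \<zeta>) t = (of_nat q - 3) / 2"
    using main assms(4,5) by blast
qed

end
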